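(* Consider $N$ agents $\mathcal{V}=\{1,\dots,N\}$ interacting over a fixed graph in which agent $i$ has the nonempty neighbor set $\mathcal{N}_i$ of cardinality $n_i$. Let $\beta\in[0,1)$ and let $(q_p(k))_{k\ge0}$ be a sequence with values in $\{-1,1\}$. The opinions evolve by $$\theta_i(k+1)=\theta_i(k)+\bigl(1-\theta_i(k)^2\bigr)\Bigl[\beta\bigl(q_p(k)-\theta_i(k)\bigr)+(1-\beta)\frac{1}{n_i}\sum_{j\in\mathcal{N}_i}\bigl(q_j(k)-\theta_i(k)\bigr)\Bigr],$$ with actions $q_j(k)=1$ if $\theta_j(k)>0$ or ($\theta_j(k)=0$ and $q_j(k-1)=1$), and $q_j(k)=-1$ if $\theta_j(k)<0$ or ($\theta_j(k)=0$ and $q_j(k-1)=-1$), and with $\theta_j(0)\in(-1,1)\setminus\{0\}$ for all $j$. Let $A\subset\mathcal{V}$ be a weakly robust polarized cluster, and suppose $q_p(k)=q_i(0)$ for all $k\in\mathbb{N}$ and all $i\in A$. Then $q_i(k)=q_i(0)$ for all $i\in A$ and all $k\in\mathbb{N}$.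
   Context: The neighbor set $\mathcal{N}_i$ consists of the agents $j$ with $(j,i)$ an edge of the graph. A subset $A\subset\mathcal{V}$ is a weakly robust polarized cluster if (i) $q_i(0)=q_j(0)$ for all $i,j\in A$, and (ii) for all $i\in A$, $|\mathcal{N}_i\cap A|\ge|\mathcal{N}_i\setminus A|-\frac{\beta}{1-\beta}|\mathcal{N}_i|$. *)

theory Defs
  imports Complex_Main
begin

definition neighbors :: "(nat \<times> nat) set \<Rightarrow> nat \<Rightarrow> nat set" where
  "neighbors E i = {j. (j, i) \<in> E}"

definition weakly_robust_polarized_cluster ::
  "(nat \<times> nat) set \<Rightarrow> (nat \<Rightarrow> real) \<Rightarrow> real \<Rightarrow> nat set \<Rightarrow> bool" where
  "weakly_robust_polarized_cluster E q0 \<beta> A \<longleftrightarrow>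
     (\<forall>i\<in>A. \<forall>j\<in>A. q0 i = q0 j) \<and>
     (\<forall>i\<in>A. real (card (neighbors E i \<inter> A))
        \<ge> real (card (neighbors E i - A)) - \<beta> / (1 - \<beta>) * real (card (neighbors E i)))"

end

theory Submission
  imports Defs
begin

lemma step_real:
  fixes u c :: real
  assumes "0<u" "u<1" "-u \<le> c" "c \<le> 1-u"
  shows "0 < u + (1-u^2)*c \<and> u+(1-u^2)*c < 1"
proof -
  have p: "0 \<le> 1-u^2" using assms by (simp add: power2_eq_square) (smt (verit) mult_le_one)
  have "(1-u^2)*(-u) \<le> (1-u^2)*c" using mult_left_mono[OF assms(3) p] .
  moreover have "(1-u^2)*c \<le> (1-u^2)*(1-u)" using mult_left_mono[OF assms(4) p] .
  moreover have "0 < u^3" using assms by simp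
  moreover have "0 < (1-u)*u^2" using assms by simp
  ultimately show ?thesis by (simp add: algebra_simps power2_eq_square power3_eq_cube)
qed

theorem mainTheorem5:
  fixes N :: nat and E :: "(nat \<times> nat) set" and \<beta> :: real
    and qp :: "nat \<Rightarrow> real"
    and \<theta> :: "nat \<Rightarrow> nat \<Rightarrow> real"   (* \<theta> k i = opinion of agent i at time k *)
    and q :: "nat \<Rightarrow> nat \<Rightarrow> real"   (* q k i = action of agent i at time k *)
    and A :: "nat set"
  defines "V \<equiv> {1..N}"
  assumes E_sub: "E \<subseteq> V \<times> V"
    and nbr_ne: "\<forall>i\<in>V. neighbors E i \<noteq> {}"
    and beta: "0 \<le> \<beta>" "\<beta> < 1"
    and qp_vals: "\<forall>k. qp k \<in> {-1, 1}"
    and init: "\<forall>j\<in>V. \<theta> 0 j \<in> {-1<..<1} \<and> \<theta> 0 j \<noteq> 0"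
    and q0: "\<forall>j\<in>V. q 0 j = (if \<theta> 0 j > 0 then 1 else -1)"
    and qrule: "\<forall>k. \<forall>j\<in>V. q (Suc k) j =
        (if \<theta> (Suc k) j > 0 then 1 else if \<theta> (Suc k) j < 0 then -1 else q k j)"
    and dyn: "\<forall>k. \<forall>i\<in>V. \<theta> (Suc k) i = \<theta> k i + (1 - (\<theta> k i)\<^sup>2) *
        (\<beta> * (qp k - \<theta> k i) + (1 - \<beta>) * (1 / real (card (neighbors E i))) *
           (\<Sum>j\<in>neighbors E i. (q k j - \<theta> k i)))"
    and A_sub: "A \<subseteq> V"
    and cluster: "weakly_robust_polarized_cluster E (q 0) \<beta> A"
    and stubborn: "\<forall>k. \<forall>i\<in>A. qp k = q 0 i"
  shows "\<forall>i\<in>A. \<forall>k. q k i = q 0 i"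
proof (cases "A = {}")
  case True then show ?thesis by simp
next
  case False
  then obtain i0 where i0: "i0 \<in> A" by blast
  define s where "s = q 0 i0"
  have sv: "s = 1 \<or> s = -1" proof -
    have "i0 \<in> V" using i0 A_sub by auto
    then show ?thesis using q0 unfolding s_def by simp
  qed
  have ss: "s*s = 1" using sv by (elim disjE) simp_all
  have cl1: "\<forall>i\<in>A. \<forall>j\<in>A. q 0 i = q 0 j" using cluster unfolding weakly_robust_polarized_cluster_def by (rule conjunct1)
  have qA0: "\<forall>i\<in>A. q 0 i = s" using cl1 i0 unfolding s_def by blast
  have card_ineq: "\<forall>i\<in>A. real (card (neighbors E i \<inter> A))
        \<ge> real (card (neighbors E i - A)) - \<beta> / (1 - \<beta>) * real (card (neighbors E i))"
    using cluster unfolding weakly_robust_polarized_cluster_def by auto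
  have nbV: "neighbors E i \<subseteq> V" for i using E_sub unfolding neighbors_def by auto
  have finN: "finite (neighbors E i)" for i using nbV[of i] unfolding V_def by (meson finite_atLeastAtMost finite_subset)
  have qvals: "\<forall>j\<in>V. q k j = 1 \<or> q k j = -1" for k
    by (induction k) (use q0 qrule in auto)
  have inv: "\<forall>i\<in>A. 0 < s * \<theta> k i \<and> s * \<theta> k i < 1 \<and> q k i = s" for k
  proof (induction k)
    case 0
    show ?case
    proof
      fix i assume iA: "i \<in> A"
      then have iV: "i \<in> V" using A_sub by auto
      have "q 0 i = s" using qA0 iA by auto
      then show "0 < s * \<theta> 0 i \<and> s * \<theta> 0 i < 1 \<and> q 0 i = s"
        using init iV q0 by (auto split: if_splits)
    qed
  next
    case (Suc k)
    have new: "0 < s * \<theta> (Suc k) i \<and> s * \<theta> (Suc k) i < 1" if iA: "i \<in> A" for i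
    proof -
      have iV: "i \<in> V" using A_sub iA by auto
      define Nb where "Nb = neighbors E i"
      define n where "n = card Nb"
      define t where "t = \<theta> k i"
      define u where "u = s * t"
      have fin: "finite Nb" using finN Nb_def by auto
      have npos: "0 < real n" using nbr_ne iV fin unfolding n_def Nb_def by (simp add: card_gt_0_iff)
      have u: "0 < u" "u < 1" using Suc.IH iA unfolding u_def t_def by auto
      define S where "S = s * (\<Sum>j\<in>Nb. q k j)"
      have S_split: "S = (\<Sum>j\<in>Nb \<inter> A. s * q k j) + (\<Sum>j\<in>Nb - A. s * q k j)"
        unfolding S_def sum_distrib_left using sum.Int_Diff[OF fin, of "\<lambda>j. s * q k j" A] by simp
      have sqN: "s * q k j = 1 \<or> s * q k j = -1" if "j \<in> Nb" for j
        using qvals[of k] that nbV sv unfolding Nb_def by fastforce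
      have s1: "(\<Sum>j\<in>Nb \<inter> A. s * q k j) = real (card (Nb \<inter> A))"
        using Suc.IH ss by simp
      have s2: "(\<Sum>j\<in>Nb - A. s * q k j) \<ge> (\<Sum>j\<in>Nb - A. -1)"
        by (rule sum_mono) (use sqN in force)
      have Slow: "S \<ge> real (card (Nb \<inter> A)) - real (card (Nb - A))"
        using S_split s1 s2 by simp
      have Shi: "S \<le> real n"
      proof -
        have "S = (\<Sum>j\<in>Nb. s * q k j)" unfolding S_def sum_distrib_left by simp
        also have "\<dots> \<le> (\<Sum>j\<in>Nb. 1)" by (rule sum_mono) (use sqN in force)
        finally show ?thesis unfolding n_def by simp
      qed
      have Slow2: "S \<ge> - (\<beta> / (1 - \<beta>) * real n)"
        using Slow card_ineq iA unfolding Nb_def n_def by force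
      have c1: "(1-\<beta>)/real n * S \<ge> -\<beta>"
      proof -
        have "(1-\<beta>)/real n * S \<ge> (1-\<beta>)/real n * (- (\<beta> / (1 - \<beta>) * real n))"
          by (rule mult_left_mono[OF Slow2]) (use beta npos in simp)
        also have "(1-\<beta>)/real n * (- (\<beta> / (1 - \<beta>) * real n)) = -\<beta>" using beta npos by (simp add: field_simps)
        finally show ?thesis .
      qed
      have c2: "(1-\<beta>)/real n * S \<le> 1 - \<beta>"
      proof -
        have "(1-\<beta>)/real n * S \<le> (1-\<beta>)/real n * real n"
          by (rule mult_left_mono[OF Shi]) (use beta npos in simp)
        also have "\<dots> = 1 - \<beta>" using npos by simp
        finally show ?thesis .
      qed
      define b where "b = \<beta> * (qp k - t) + (1 - \<beta>) * (1 / real n) * (\<Sum>j\<in>Nb. (q k j - t))"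
      have qpk: "qp k = s" using stubborn iA qA0 by auto
      have sumsub: "(\<Sum>j\<in>Nb. (q k j - t)) = (\<Sum>j\<in>Nb. q k j) - real n * t"
        unfolding n_def by (simp add: sum_subtractf)
      have sb: "s * b = \<beta> + (1-\<beta>)/real n * S - u"
      proof -
        have "s * b = \<beta> * (s*s - s*t) + (1-\<beta>) / real n * (S - real n * (s*t))"
          unfolding b_def sumsub qpk S_def by (simp add: algebra_simps)
        also have "\<dots> = \<beta> * (1 - u) + (1-\<beta>) / real n * S - (1-\<beta>) * u"
          using ss npos unfolding u_def by (simp add: field_simps)
        finally show ?thesis by (simp add: algebra_simps)
      qed
      have th: "\<theta> (Suc k) i = t + (1 - t^2) * b"
        using dyn iV unfolding b_def t_def Nb_def n_def by simp
      have "s * \<theta> (Suc k) i = u + (1 - u^2) * (s*b)"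
      proof -
        have "u^2 = t^2" unfolding u_def power2_eq_square using ss by (simp add: algebra_simps)
        then show ?thesis unfolding th u_def by (simp add: algebra_simps)
      qed
      moreover have "0 < u + (1-u^2)*(s*b) \<and> u + (1-u^2)*(s*b) < 1"
        by (rule step_real) (use u sb c1 c2 beta in auto)
      ultimately show ?thesis by simp
    qed
    show ?case
    proof
      fix i assume iA: "i \<in> A"
      have iV: "i \<in> V" using A_sub iA by auto
      have "q (Suc k) i = s"
        using new[OF iA] qrule iV sv by (auto simp: zero_less_mult_iff)
      then show "0 < s * \<theta> (Suc k) i \<and> s * \<theta> (Suc k) i < 1 \<and> q (Suc k) i = s"
        using new[OF iA] by simp
    qed
  qed
  show ?thesis using inv qA0 by auto
qed

end
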